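(* Let $\mathcal L$ be a finite atomic lattice with atoms $A_1,\dots,A_n$ and $\mathcal G$ a building set in $\mathcal L$. Construct a fan $\Theta(\mathcal L,\mathcal G)$ in $\mathbb R^n$ as follows. (0) Let $\Theta_0$ be the fan consisting of the cone spanned by the standard basis vectors $e_1,\dots,e_n$ of $\mathbb R^n$ and all its faces. (1) Choose a linear order $\succ$ on $\mathcal G$ with $G\le G'$ in $\mathcal L$ implying $G'\succeq G$, and write $\mathcal G=\{G_1\succ G_2\succ\dots\succ G_t\}$. For $i=1,\dots,t$ successively, perform the stellar subdivision of the current fan at the cone $V(\lfloor G_i\rfloor)$ with new ray generated by $v_{G_i}$; call the resulting fan $\widetilde\Theta(\mathcal L,\mathcal G)$. (2) Remove from $\widetilde\Theta(\mathcal L,\mathcal G)$ all cones $V(\mathcal T)$ whose set $\mathcal T\subseteq\mathcal G$ of indices of generating vectors is not nested, and call the result $\Theta(\mathcal L,\mathcal G)$. Then $\Theta(\mathcal L,\mathcal G)$ coincides with the fan $\Sigma(\mathcal L,\mathcal G)=\{V(\mathcal S):\mathcal S\text{ nested in }\mathcal G\}$.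
   Context: A lattice is a finite poset in which every subset has a join $\vee$ and a meet; $\hat0$ is its least element; atomic means every element is a join of atoms. For $X\le Y$ write $[X,Y]=\{Z:X\le Z\le Y\}$ and $\mathcal G_{\le X}=\{G\in\mathcal G:G\le X\}$. A subset $\mathcal G\subseteq\mathcal L\setminus\{\hat0\}$ is a building set if for every $X\ne\hat0$, with $\{G_1,\dots,G_k\}$ the maximal elements of $\mathcal G_{\le X}$, there is a poset isomorphism $\prod_{i=1}^k[\hat0,G_i]\to[\hat0,X]$ sending $(\hat0,\dots,G_i,\dots,\hat0)$ to $G_i$ (in particular all atoms lie in $\mathcal G$). A subset $\mathcal S\subseteq\mathcal G$ is nested if for every set of pairwise incomparable $G_1,\dots,G_t\in\mathcal S$, $t\ge2$, $G_1\vee\dots\vee G_t\notin\mathcal G$. For $X\in\mathcal L$, $\lfloor X\rfloor$ is the set of atoms below $X$, and $v_X\in\mathbb R^n$ has $i$-th coordinate $1$ if $A_i\le X$ and $0$ otherwise (so $v_{A_i}=e_i$); $V(\mathcal S)$ is the cone spanned by $\{v_X:X\in\mathcal S\}$. The stellar subdivision of a fan $\Theta$ at a cone $\tau\in\Theta$ with new ray spanned by $v$ in the relative interior of $\tau$ replaces every cone $\sigma\in\Theta$ containing $\tau$ by the cones spanned by $\rho\cup\{v\}$ for all faces $\rho$ of $\sigma$ not containing $\tau$ (and these faces $\rho$ themselves); here $v_{G_i}$ is the sum of the generators $e_j$ of $V(\lfloor G_i\rfloor)$ (barycentric subdivision). *)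

theory Defs
  imports "HOL-Analysis.Analysis"
begin

text \<open>R^n is realised as real^'a: the coordinates indexed by the atoms carry the
 construction, all other coordinates are identically zero (a linear
 embedding of R^n = R^{atoms}).\<close>

definition is_atom :: "'a::complete_lattice \<Rightarrow> bool" where
  "is_atom a \<longleftrightarrow> a \<noteq> bot \<and> (\<forall>b. b \<le> a \<longrightarrow> b = bot \<or> b = a)"

definition atomic_lattice :: "'a::complete_lattice itself \<Rightarrow> bool" where
  "atomic_lattice _ \<longleftrightarrow> (\<forall>X::'a. X = Sup {a. is_atom a \<and> a \<le> X})"

definition atoms_below :: "'a::complete_lattice \<Rightarrow> 'a set" where
  "atoms_below X = {a. is_atom a \<and> a \<le> X}"

text \<open>Building set: for every X \<noteq> bot with M the maximal elements of G_{\<le>X},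
 there is a poset isomorphism from prod_{G\<in>M} [bot,G] (functions on M,
 extended by bot outside M, ordered componentwise) onto [bot,X] mapping the
 "unit vector" at G to G.\<close>
definition building_set :: "'a::complete_lattice set \<Rightarrow> bool" where
  "building_set \<G> \<longleftrightarrow> bot \<notin> \<G> \<and>
    (\<forall>X. X \<noteq> bot \<longrightarrow>
      (let M = {G \<in> \<G>. G \<le> X \<and> \<not>(\<exists>H\<in>\<G>. H \<le> X \<and> G < H)};
           P = {f. (\<forall>G\<in>M. f G \<le> G) \<and> (\<forall>G. G \<notin> M \<longrightarrow> f G = bot)}
       in \<exists>\<phi>. bij_betw \<phi> P {bot..X} \<and>
              (\<forall>f\<in>P. \<forall>g\<in>P. (\<forall>G\<in>M. f G \<le> g G) \<longleftrightarrow> \<phi> f \<le> \<phi> g) \<and>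
              (\<forall>G\<in>M. \<phi> (\<lambda>H. if H = G then G else bot) = G)))"

definition nested :: "'a::complete_lattice set \<Rightarrow> 'a set \<Rightarrow> bool" where
  "nested \<G> S \<longleftrightarrow> S \<subseteq> \<G> \<and>
    (\<forall>T \<subseteq> S. 2 \<le> card T \<and> (\<forall>G\<in>T. \<forall>H\<in>T. G \<noteq> H \<longrightarrow> \<not> G \<le> H)
        \<longrightarrow> Sup T \<notin> \<G>)"

definition vvec :: "'a::{finite,complete_lattice} \<Rightarrow> real^('a::{finite,complete_lattice})" where
  "vvec X = (\<chi> i. if is_atom i \<and> i \<le> X then 1 else 0)"

definition cone_span :: "'n::real_vector set \<Rightarrow> 'n set" where
  "cone_span W = {\<Sum>w\<in>W. c w *\<^sub>R w | c. \<forall>w\<in>W. 0 \<le> c w}"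

definition Vcone :: "'a::{finite,complete_lattice} set \<Rightarrow> (real^('a::{finite,complete_lattice})) set" where
  "Vcone S = cone_span (vvec ` S)"

definition faces :: "'n::real_vector set \<Rightarrow> 'n set set" where
  "faces \<sigma> = {\<rho>. \<rho> face_of \<sigma> \<and> \<rho> \<noteq> {}}"

definition add_ray :: "'n::real_vector set \<Rightarrow> 'n \<Rightarrow> 'n set" where
  "add_ray \<rho> v = {x + t *\<^sub>R v | x t. x \<in> \<rho> \<and> 0 \<le> t}"

definition stellar :: "'n::real_vector set set \<Rightarrow> 'n set \<Rightarrow> 'n \<Rightarrow> 'n set set" where
  "stellar \<Theta> \<tau> v =
     {\<sigma> \<in> \<Theta>. \<not> \<tau> face_of \<sigma>}
     \<union> {add_ray \<rho> v | \<sigma> \<rho>. \<sigma> \<in> \<Theta> \<and> \<tau> face_of \<sigma> \<and> \<rho> \<in> faces \<sigma> \<and> \<not> \<tau> \<subseteq> \<rho>}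
     \<union> {\<rho> | \<sigma> \<rho>. \<sigma> \<in> \<Theta> \<and> \<tau> face_of \<sigma> \<and> \<rho> \<in> faces \<sigma> \<and> \<not> \<tau> \<subseteq> \<rho>}"

definition Theta0 :: "'a::{finite,complete_lattice} itself \<Rightarrow> (real^('a::{finite,complete_lattice})) set set" where
  "Theta0 _ = faces (cone_span {axis a 1 | a::'a. is_atom a})"

text \<open>\<Theta>~ for the order given by the list gs = [G_1, ..., G_t] (G_1 first).\<close>
definition Theta_tilde :: "'a::{finite,complete_lattice} list \<Rightarrow> (real^('a::{finite,complete_lattice})) set set" where
  "Theta_tilde gs = fold (\<lambda>G \<Theta>. stellar \<Theta> (Vcone (atoms_below G)) (vvec G)) gs (Theta0 TYPE('a))"

definition Theta :: "'a::{finite,complete_lattice} set \<Rightarrow> 'a list \<Rightarrow> (real^('a::{finite,complete_lattice})) set set" where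
  "Theta \<G> gs = Theta_tilde gs - {Vcone T | T. T \<subseteq> \<G> \<and> \<not> nested \<G> T}"

definition Sigma_fan :: "'a::{finite,complete_lattice} set \<Rightarrow> (real^('a::{finite,complete_lattice})) set set" where
  "Sigma_fan \<G> = {Vcone S | S. nested \<G> S}"

end

theory Submission
  imports Defs
begin


lemma cs_convex_cone:
  fixes W :: "'n::real_vector set"
  shows "convex_cone (cone_span W)"
  unfolding convex_cone_iff cone_span_def
proof (intro conjI ballI allI impI)
  show "0 \<in> {\<Sum>w\<in>W. c w *\<^sub>R w |c. \<forall>w\<in>W. 0 \<le> c w}"
    by (rule CollectI, rule exI[of _ "\<lambda>_. 0"]) auto
next
  fix x y assume "x \<in> {\<Sum>w\<in>W. c w *\<^sub>R w |c. \<forall>w\<in>W. 0 \<le> c w}"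
    "y \<in> {\<Sum>w\<in>W. c w *\<^sub>R w |c. \<forall>w\<in>W. 0 \<le> c w}"
  then obtain c d where "x = (\<Sum>w\<in>W. c w *\<^sub>R w)" "\<forall>w\<in>W. 0 \<le> c w"
     "y = (\<Sum>w\<in>W. d w *\<^sub>R w)" "\<forall>w\<in>W. 0 \<le> d w" by auto
  then show "x + y \<in> {\<Sum>w\<in>W. c w *\<^sub>R w |c. \<forall>w\<in>W. 0 \<le> c w}"
    by (intro CollectI exI[of _ "\<lambda>w. c w + d w"]) (auto simp: sum.distrib scaleR_add_left)
next
  fix x and a :: real assume "x \<in> {\<Sum>w\<in>W. c w *\<^sub>R w |c. \<forall>w\<in>W. 0 \<le> c w}" "0 \<le> a"
  then obtain c where "x = (\<Sum>w\<in>W. c w *\<^sub>R w)" "\<forall>w\<in>W. 0 \<le> c w" by auto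
  then show "a *\<^sub>R x \<in> {\<Sum>w\<in>W. c w *\<^sub>R w |c. \<forall>w\<in>W. 0 \<le> c w}"
    using \<open>0 \<le> a\<close>
    by (intro CollectI exI[of _ "\<lambda>w. a * c w"]) (auto simp: scaleR_sum_right)
qed

lemma cs_sum_in:
  assumes "convex_cone S" "finite A" "\<forall>i\<in>A. f i \<in> S"
  shows "sum f A \<in> S"
  using assms(2,3)
proof (induction A rule: finite_induct)
  case empty then show ?case using assms(1) by (simp add: convex_cone_contains_0)
next
  case (insert x F) then show ?case using assms(1) by (simp add: convex_cone_add)
qed

lemma cs_least:
  fixes W :: "'n::real_vector set"
  assumes "convex_cone S" "W \<subseteq> S" "finite W"
  shows "cone_span W \<subseteq> S"
proof
  fix x assume "x \<in> cone_span W"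
  then obtain c where x: "x = (\<Sum>w\<in>W. c w *\<^sub>R w)" "\<forall>w\<in>W. 0 \<le> c w"
    by (auto simp: cone_span_def)
  show "x \<in> S" unfolding x(1)
    using assms x(2) by (intro cs_sum_in) (auto intro: convex_cone_scaleR)
qed

lemma cs_base:
  fixes W :: "'n::real_vector set"
  assumes "finite W" "w \<in> W"
  shows "w \<in> cone_span W"
proof -
  have "(\<Sum>v\<in>W. (if v = w then 1 else 0) *\<^sub>R v) = (\<Sum>v\<in>W. if v = w then w else 0)"
    by (rule sum.cong) auto
  also have "\<dots> = w" using assms by simp
  finally have "(\<Sum>v\<in>W. (if v = w then 1 else 0) *\<^sub>R v) = w" .
  then show ?thesis unfolding cone_span_def
    by (intro CollectI exI[of _ "\<lambda>v. if v = w then 1 else 0"]) auto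
qed

lemma cs_mono:
  fixes W :: "'n::real_vector set"
  assumes "finite W" "V \<subseteq> W"
  shows "cone_span V \<subseteq> cone_span W"
  by (rule cs_least[OF cs_convex_cone]) (use assms cs_base in \<open>auto intro: finite_subset\<close>)

lemma cs_uniq:
  fixes W :: "'n::real_vector set"
  assumes "finite W" "independent W"
    "(\<Sum>w\<in>W. c w *\<^sub>R w) = (\<Sum>w\<in>W. d w *\<^sub>R w)"
  shows "\<forall>w\<in>W. c w = d w"
proof (rule ccontr)
  assume "\<not> (\<forall>w\<in>W. c w = d w)"
  then obtain v where "v \<in> W" "(\<lambda>w. c w - d w) v \<noteq> 0" by auto
  moreover have "(\<Sum>w\<in>W. (c w - d w) *\<^sub>R w) = 0"
    using assms(3) by (simp add: scaleR_diff_left sum_subtractf)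
  ultimately have "dependent W"
    unfolding dependent_finite[OF assms(1)] by (intro exI[of _ "\<lambda>w. c w - d w"]) auto
  then show False using assms(2) by simp
qed


lemma cs_memI:
  fixes W :: "'n::real_vector set"
  assumes "x = (\<Sum>w\<in>W. c w *\<^sub>R w)" "\<forall>w\<in>W. 0 \<le> c w"
  shows "x \<in> cone_span W"
  using assms unfolding cone_span_def by auto

lemma cs_memE:
  fixes W :: "'n::real_vector set"
  assumes "x \<in> cone_span W"
  obtains c where "x = (\<Sum>w\<in>W. c w *\<^sub>R w)" "\<forall>w\<in>W. 0 \<le> c w"
  using assms unfolding cone_span_def by auto

lemma cs_restrict:
  fixes W :: "'n::real_vector set"
  assumes "finite W" "D \<subseteq> W" "x = (\<Sum>w\<in>W. c w *\<^sub>R w)" "\<forall>w\<in>W. 0 \<le> c w"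
    "\<forall>w\<in>W - D. c w = 0"
  shows "x \<in> cone_span D"
proof -
  have "x = (\<Sum>w\<in>D. c w *\<^sub>R w)"
    unfolding assms(3) using assms by (intro sum.mono_neutral_right) auto
  then show ?thesis using assms by (intro cs_memI[where c=c]) auto
qed

lemma cs_extend:
  fixes W :: "'n::real_vector set"
  assumes "finite W" "D \<subseteq> W"
  shows "(\<Sum>w\<in>D. c w *\<^sub>R w) = (\<Sum>w\<in>W. (if w \<in> D then c w else 0) *\<^sub>R w)"
proof -
  have "(\<Sum>w\<in>W. (if w \<in> D then c w else 0) *\<^sub>R w) = (\<Sum>w\<in>D. (if w \<in> D then c w else 0) *\<^sub>R w)"
    using assms by (intro sum.mono_neutral_right) auto
  also have "\<dots> = (\<Sum>w\<in>D. c w *\<^sub>R w)" by (rule sum.cong) auto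
  finally show ?thesis by simp
qed

lemma face_cone_0:
  fixes K :: "'n::real_vector set"
  assumes "F face_of K" "convex_cone K" "F \<noteq> {}"
  shows "0 \<in> F"
proof -
  obtain x where x: "x \<in> F" using assms(3) by auto
  show ?thesis
  proof (cases "x = 0")
    case True then show ?thesis using x by simp
  next
    case False
    have xK: "x \<in> K" using x assms(1) face_of_imp_subset by blast
    have "x \<in> open_segment 0 (2 *\<^sub>R x)"
      unfolding in_segment using False by (intro conjI exI[of _ "1/2"]) auto
    moreover have "0 \<in> K" "2 *\<^sub>R x \<in> K"
      using assms(2) xK by (auto simp: convex_cone_contains_0 convex_cone_scaleR)
    ultimately show ?thesis using face_ofD[OF assms(1)] x by blast
  qed
qed

lemma face_cone_scale:
  fixes K :: "'n::real_vector set"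
  assumes "F face_of K" "convex_cone K" "x \<in> F" "0 \<le> a"
  shows "a *\<^sub>R x \<in> F"
proof -
  have F0: "0 \<in> F" using face_cone_0[OF assms(1,2)] assms(3) by auto
  have cF: "convex F" using assms(1) face_of_imp_convex by blast
  have xK: "x \<in> K" using assms(1,3) face_of_imp_subset by blast
  show ?thesis
  proof (cases "a \<le> 1")
    case True
    have "(1 - a) *\<^sub>R 0 + a *\<^sub>R x \<in> F"
      using convexD[OF cF F0 assms(3), of "1-a" a] True assms(4) by auto
    then show ?thesis by simp
  next
    case False
    show ?thesis
    proof (cases "x = 0")
      case True then show ?thesis using assms(3) by simp
    next
      case x0: False
      have "x \<in> open_segment 0 (a *\<^sub>R x)"
        unfolding in_segment using False x0
        by (intro conjI exI[of _ "1/a"]) auto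
      moreover have "0 \<in> K" "a *\<^sub>R x \<in> K"
        using assms(2,4) xK by (auto simp: convex_cone_contains_0 convex_cone_scaleR)
      ultimately show ?thesis using face_ofD[OF assms(1)] assms(3) by blast
    qed
  qed
qed

lemma face_cone_cc:
  fixes K :: "'n::real_vector set"
  assumes "F face_of K" "convex_cone K" "F \<noteq> {}"
  shows "convex_cone F"
  unfolding convex_cone_iff
proof (intro conjI ballI allI impI)
  show "0 \<in> F" using face_cone_0[OF assms] .
next
  fix x y assume xy: "x \<in> F" "y \<in> F"
  have cF: "convex F" using assms(1) face_of_imp_convex by blast
  have "(1/2) *\<^sub>R x + (1/2) *\<^sub>R y \<in> F" using convexD[OF cF xy] by auto
  then have "2 *\<^sub>R ((1/2) *\<^sub>R x + (1/2) *\<^sub>R y) \<in> F"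
    using face_cone_scale[OF assms(1,2)] by auto
  then show "x + y \<in> F" by (simp add: scaleR_add_right)
next
  fix x and c :: real assume "x \<in> F" "0 \<le> c"
  then show "c *\<^sub>R x \<in> F" using face_cone_scale[OF assms(1,2)] by auto
qed

lemma face_cone_split:
  fixes K :: "'n::real_vector set"
  assumes "F face_of K" "convex_cone K" "x \<in> F" "x = y + z" "y \<in> K" "z \<in> K"
  shows "y \<in> F"
proof (cases "y = z")
  case True
  then have "y = (1/2) *\<^sub>R x" using assms(4) by (simp add: scaleR_2[symmetric])
  then show ?thesis using face_cone_scale[OF assms(1,2,3)] by auto
next
  case False
  have "x \<in> open_segment (2 *\<^sub>R y) (2 *\<^sub>R z)"
    unfolding in_segment using False assms(4)
    by (intro conjI exI[of _ "1/2"]) (auto simp: scaleR_add_right)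
  moreover have "2 *\<^sub>R y \<in> K" "2 *\<^sub>R z \<in> K"
    using assms(2,5,6) by (auto simp: convex_cone_scaleR)
  ultimately have "2 *\<^sub>R y \<in> F" using face_ofD[OF assms(1)] assms(3) by blast
  then have "(1/2) *\<^sub>R (2 *\<^sub>R y) \<in> F" using face_cone_scale[OF assms(1,2), of "2 *\<^sub>R y" "1/2"] by auto
  then show ?thesis by simp
qed


lemma cs_face_of:
  fixes W :: "'n::real_vector set"
  assumes fin: "finite W" and ind: "independent W" and DW: "D \<subseteq> W"
  shows "cone_span D face_of cone_span W"
  unfolding face_of_def
proof (intro conjI ballI impI)
  show "cone_span D \<subseteq> cone_span W" using cs_mono[OF fin DW] .
  show "convex (cone_span D)" using cs_convex_cone[of D] by (simp add: convex_cone_def)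
next
  fix a b x assume a: "a \<in> cone_span W" and b: "b \<in> cone_span W" and x: "x \<in> cone_span D"
    and seg: "x \<in> open_segment a b"
  obtain \<alpha> where \<alpha>: "a = (\<Sum>w\<in>W. \<alpha> w *\<^sub>R w)" "\<forall>w\<in>W. 0 \<le> \<alpha> w" using a by (rule cs_memE)
  obtain \<beta> where \<beta>: "b = (\<Sum>w\<in>W. \<beta> w *\<^sub>R w)" "\<forall>w\<in>W. 0 \<le> \<beta> w" using b by (rule cs_memE)
  obtain \<gamma> where \<gamma>: "x = (\<Sum>w\<in>D. \<gamma> w *\<^sub>R w)" "\<forall>w\<in>D. 0 \<le> \<gamma> w" using x by (rule cs_memE)
  obtain u where u: "0 < u" "u < 1" "x = (1 - u) *\<^sub>R a + u *\<^sub>R b" using seg unfolding in_segment by auto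
  have e1: "x = (\<Sum>w\<in>W. (if w \<in> D then \<gamma> w else 0) *\<^sub>R w)"
    using \<gamma>(1) cs_extend[OF fin DW] by simp
  have e2: "x = (\<Sum>w\<in>W. ((1 - u) * \<alpha> w + u * \<beta> w) *\<^sub>R w)"
  proof -
    have "x = (\<Sum>w\<in>W. ((1 - u) * \<alpha> w) *\<^sub>R w + (u * \<beta> w) *\<^sub>R w)"
      unfolding u(3) \<alpha>(1) \<beta>(1) scaleR_sum_right scaleR_scaleR sum.distrib ..
    also have "\<dots> = (\<Sum>w\<in>W. ((1 - u) * \<alpha> w + u * \<beta> w) *\<^sub>R w)"
      by (simp only: scaleR_add_left)
    finally show ?thesis .
  qed
  have "(\<Sum>w\<in>W. (if w \<in> D then \<gamma> w else 0) *\<^sub>R w) = (\<Sum>w\<in>W. ((1 - u) * \<alpha> w + u * \<beta> w) *\<^sub>R w)"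
    using e1 e2 by (rule trans[OF sym])
  from cs_uniq[OF fin ind this]
  have eq: "\<forall>w\<in>W. (if w \<in> D then \<gamma> w else 0) = (1 - u) * \<alpha> w + u * \<beta> w" .
  have z: "\<forall>w\<in>W - D. \<alpha> w = 0 \<and> \<beta> w = 0"
  proof
    fix w assume w: "w \<in> W - D"
    then have "(1 - u) * \<alpha> w + u * \<beta> w = 0" using eq by auto
    moreover have "0 \<le> (1 - u) * \<alpha> w" "0 \<le> u * \<beta> w" using w \<alpha>(2) \<beta>(2) u by auto
    ultimately have "(1 - u) * \<alpha> w = 0" "u * \<beta> w = 0" by linarith+
    then show "\<alpha> w = 0 \<and> \<beta> w = 0" using u by auto
  qed
  show "a \<in> cone_span D" using cs_restrict[OF fin DW \<alpha>] z by auto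
  show "b \<in> cone_span D" using cs_restrict[OF fin DW \<beta>] z by auto
qed

lemma faces_cs:
  fixes W :: "'n::real_vector set"
  assumes fin: "finite W" and ind: "independent W"
  shows "faces (cone_span W) = cone_span ` Pow W"
proof
  show "cone_span ` Pow W \<subseteq> faces (cone_span W)"
  proof
    fix F assume "F \<in> cone_span ` Pow W"
    then obtain D where D: "D \<subseteq> W" "F = cone_span D" by auto
    have "0 \<in> F" unfolding D(2) by (rule convex_cone_contains_0[OF cs_convex_cone])
    then show "F \<in> faces (cone_span W)"
      unfolding faces_def using cs_face_of[OF fin ind D(1)] D(2) by auto
  qed
next
  show "faces (cone_span W) \<subseteq> cone_span ` Pow W"
  proof
    fix F assume "F \<in> faces (cone_span W)"
    then have F: "F face_of cone_span W" "F \<noteq> {}" unfolding faces_def by auto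
    have K: "convex_cone (cone_span W)" by (rule cs_convex_cone)
    have FK: "F \<subseteq> cone_span W" using F(1) face_of_imp_subset by blast
    define D where "D = W \<inter> F"
    have "F = cone_span D"
    proof
      have "D \<subseteq> F" "finite D" using fin unfolding D_def by auto
      then show "cone_span D \<subseteq> F"
        using cs_least[OF face_cone_cc[OF F(1) K F(2)]] by blast
    next
      show "F \<subseteq> cone_span D"
      proof
        fix x assume x: "x \<in> F"
        have "x \<in> cone_span W" using FK x by blast
        then obtain c where c: "x = (\<Sum>w\<in>W. c w *\<^sub>R w)" "\<forall>w\<in>W. 0 \<le> c w"
          by (rule cs_memE)
        have "\<forall>w\<in>W - D. c w = 0"
        proof (rule ballI, rule ccontr)
          fix w assume w: "w \<in> W - D" "c w \<noteq> 0"
          have "x = c w *\<^sub>R w + (\<Sum>v\<in>W - {w}. c v *\<^sub>R v)"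
            unfolding c(1) using sum.remove[OF fin, of w "\<lambda>v. c v *\<^sub>R v"] w by blast
          moreover have "c w *\<^sub>R w \<in> cone_span W"
            using w c(2) K cs_base[OF fin] by (auto intro: convex_cone_scaleR)
          moreover have "(\<Sum>v\<in>W - {w}. c v *\<^sub>R v) \<in> cone_span (W - {w})"
            by (rule cs_memI[where c=c]) (use c(2) in auto)
          then have "(\<Sum>v\<in>W - {w}. c v *\<^sub>R v) \<in> cone_span W"
            using cs_mono[OF fin, of "W - {w}"] by blast
          ultimately have "c w *\<^sub>R w \<in> F" by (rule face_cone_split[OF F(1) K x])
          then have "(1 / c w) *\<^sub>R (c w *\<^sub>R w) \<in> F"
            using face_cone_scale[OF F(1) K, of "c w *\<^sub>R w" "1 / c w"] w c(2) by auto
          then have "w \<in> F" using w by simp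
          then show False using w unfolding D_def by auto
        qed
        moreover have "D \<subseteq> W" unfolding D_def by blast
        ultimately show "x \<in> cone_span D" using cs_restrict[OF fin _ c] by blast
      qed
    qed
    then show "F \<in> cone_span ` Pow W" unfolding D_def by auto
  qed
qed



lemma atom_le_atom: "is_atom (a::'a::complete_lattice) \<Longrightarrow> is_atom b \<Longrightarrow> a \<le> b \<Longrightarrow> a = b"
  unfolding is_atom_def by blast

lemma atomic_Sup: "atomic_lattice TYPE('a::complete_lattice) \<Longrightarrow> (X::'a) = Sup (atoms_below X)"
  unfolding atomic_lattice_def atoms_below_def by blast

lemma atoms_le: "atomic_lattice TYPE('a::complete_lattice) \<Longrightarrow> atoms_below (X::'a) \<subseteq> atoms_below Y \<Longrightarrow> X \<le> Y"
proof -
  assume at: "atomic_lattice TYPE('a)" and sub: "atoms_below X \<subseteq> atoms_below Y"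
  have "X = Sup (atoms_below X)" by (rule atomic_Sup[OF at])
  also have "\<dots> \<le> Sup (atoms_below Y)" by (rule Sup_subset_mono[OF sub])
  also have "\<dots> = Y" by (rule atomic_Sup[OF at, symmetric])
  finally show "X \<le> Y" .
qed

lemma ex_atom: "atomic_lattice TYPE('a::complete_lattice) \<Longrightarrow> (X::'a) \<noteq> bot \<Longrightarrow> \<exists>a. is_atom a \<and> a \<le> X"
proof (rule ccontr)
  assume at: "atomic_lattice TYPE('a)" and nb: "X \<noteq> bot" and no: "\<not> (\<exists>a. is_atom a \<and> a \<le> X)"
  have "atoms_below X = {}" using no unfolding atoms_below_def by blast
  then have "Sup (atoms_below X) = bot" by simp
  then show False using atomic_Sup[OF at, of X] nb by argo
qed

lemma atoms_below_atom: "is_atom (a::'a::complete_lattice) \<Longrightarrow> atoms_below a = {a}"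
  unfolding atoms_below_def using atom_le_atom by blast

lemma vvec_nth: "vvec X $ i = (if is_atom i \<and> i \<le> X then 1 else 0)"
  by (simp add: vvec_def)

lemma vvec_inj: "atomic_lattice TYPE('a::{finite,complete_lattice}) \<Longrightarrow> vvec (X::'a) = vvec Y \<Longrightarrow> X = Y"
proof -
  assume at: "atomic_lattice TYPE('a)" and eq: "vvec X = vvec Y"
  have "atoms_below X = atoms_below Y"
  proof -
    have "\<forall>i. (is_atom i \<and> i \<le> X) = (is_atom i \<and> i \<le> Y)"
    proof
      fix i
      have "vvec X $ i = vvec Y $ i" using eq by simp
      then show "(is_atom i \<and> i \<le> X) = (is_atom i \<and> i \<le> Y)"
        unfolding vvec_nth by (auto split: if_splits)
    qed
    then show ?thesis unfolding atoms_below_def by blast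
  qed
  then show "X = Y" using atoms_le[OF at] by (metis order_antisym order_refl)
qed

lemma inj_vvec: "atomic_lattice TYPE('a::{finite,complete_lattice}) \<Longrightarrow> inj (vvec :: 'a \<Rightarrow> _)"
  using vvec_inj by (metis injI)

lemma vvec_atom: "is_atom (a::'a::{finite,complete_lattice}) \<Longrightarrow> vvec a = axis a 1"
  unfolding vec_eq_iff vvec_nth axis_def using atom_le_atom by auto

lemma vvec_sum_atoms:
  "vvec (G::'a::{finite,complete_lattice}) = (\<Sum>a\<in>atoms_below G. vvec a)"
proof (subst vec_eq_iff, rule allI)
  fix i
  have "(\<Sum>a\<in>atoms_below G. vvec a) $ i = (\<Sum>a\<in>atoms_below G. if a = i then 1 else 0)"
    unfolding sum_component
    by (rule sum.cong) (auto simp: vvec_nth atoms_below_def dest: atom_le_atom)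
  also have "\<dots> = (if i \<in> atoms_below G then 1 else 0)"
    by (simp add: sum.delta')
  finally show "vvec G $ i = (\<Sum>a\<in>atoms_below G. vvec a) $ i"
    by (simp add: vvec_nth atoms_below_def)
qed

lemma Vcone_memE:
  assumes at: "atomic_lattice TYPE('a::{finite,complete_lattice})" and x: "x \<in> Vcone (C::'a set)"
  obtains c where "x = (\<Sum>H\<in>C. c H *\<^sub>R vvec H)" "\<forall>H\<in>C. 0 \<le> c H"
proof -
  obtain d where d: "x = (\<Sum>w\<in>vvec ` C. d w *\<^sub>R w)" "\<forall>w\<in>vvec ` C. 0 \<le> d w"
    using x unfolding Vcone_def by (rule cs_memE)
  have "x = (\<Sum>H\<in>C. d (vvec H) *\<^sub>R vvec H)"
    unfolding d(1) using inj_vvec[OF at]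
    by (subst sum.reindex) (auto intro: inj_on_subset)
  then show ?thesis using that d(2) by auto
qed

lemma Vcone_memI:
  assumes at: "atomic_lattice TYPE('a::{finite,complete_lattice})"
    and "x = (\<Sum>H\<in>(C::'a set). c H *\<^sub>R vvec H)" "\<forall>H\<in>C. 0 \<le> c H"
  shows "x \<in> Vcone C"
proof -
  define d where "d w = c (the_inv vvec w)" for w
  have dd: "d (vvec H) = c H" for H
    unfolding d_def using the_inv_f_f[OF inj_vvec[OF at]] by simp
  have "x = (\<Sum>w\<in>vvec ` C. d w *\<^sub>R w)"
    unfolding assms(2) using inj_vvec[OF at]
    by (subst sum.reindex) (auto intro: inj_on_subset simp: dd)
  moreover have "\<forall>w\<in>vvec ` C. 0 \<le> d w" using assms(3) dd by auto
  ultimately show ?thesis unfolding Vcone_def by (rule cs_memI)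
qed

lemma comb_nth:
  "(\<Sum>H\<in>C. c H *\<^sub>R vvec H) $ i = (\<Sum>H\<in>C. if is_atom i \<and> i \<le> H then c H else 0)"
  unfolding sum_component by (rule sum.cong) (auto simp: vvec_nth)

lemma comb_zero:
  assumes "finite C" "\<forall>H\<in>C. 0 \<le> c H" "(\<Sum>H\<in>C. c H *\<^sub>R vvec H) $ i = 0" "is_atom i"
    "H \<in> C" "i \<le> H"
  shows "c H = 0"
proof -
  have eq: "(\<Sum>H\<in>C. if is_atom i \<and> i \<le> H then c H else 0) = 0"
    using assms(3) by (simp only: comb_nth)
  have nn: "\<And>K. K \<in> C \<Longrightarrow> 0 \<le> (if is_atom i \<and> i \<le> K then c K else 0)" using assms(2) by auto
  have "\<forall>H'\<in>C. (if is_atom i \<and> i \<le> H' then c H' else 0) = 0"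
    using sum_nonneg_eq_0_iff[of C "\<lambda>K. if is_atom i \<and> i \<le> K then c K else 0"] assms(1) nn eq by blast
  then have "(if is_atom i \<and> i \<le> H then c H else 0) = 0" using assms(5) by blast
  then show ?thesis using assms(4,6) by simp
qed

lemma comb_nonzero:
  assumes "(\<Sum>H\<in>C. c H *\<^sub>R vvec H) $ i \<noteq> 0"
  shows "\<exists>H\<in>C. i \<le> H \<and> c H \<noteq> 0"
proof (rule ccontr)
  assume "\<not> ?thesis"
  then have eq: "(\<Sum>H\<in>C. if is_atom i \<and> i \<le> H then c H else 0) = 0"
    by (intro sum.neutral) auto
  have "(\<Sum>H\<in>C. if is_atom i \<and> i \<le> H then c H else 0) \<noteq> 0"
    using assms unfolding comb_nth by assumption
  then show False using eq by simp
qed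



lemma label_lemma:
  assumes at: "atomic_lattice TYPE('a::{finite,complete_lattice})"
    and Cb: "bot \<notin> (C::'a set)" and a: "is_atom a" and v: "vvec a \<in> Vcone C"
  shows "a \<in> C"
proof -
  obtain c where c: "vvec a = (\<Sum>H\<in>C. c H *\<^sub>R vvec H)" "\<forall>H\<in>C. 0 \<le> c H"
    using Vcone_memE[OF at v] by blast
  have "vvec a $ a \<noteq> 0" using a by (simp add: vvec_nth)
  then obtain H where H: "H \<in> C" "a \<le> H" "c H \<noteq> 0" using comb_nonzero c(1) by metis
  have "atoms_below H \<subseteq> atoms_below a"
  proof
    fix b assume b: "b \<in> atoms_below H"
    show "b \<in> atoms_below a"
    proof (rule ccontr)
      assume "b \<notin> atoms_below a"
      have bat: "is_atom b" "b \<le> H" using b by (auto simp: atoms_below_def)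
      have "b \<noteq> a" using \<open>b \<notin> atoms_below a\<close> a by (auto simp: atoms_below_def)
      then have "vvec a $ b = 0" by (simp add: vvec_nth) (use atom_le_atom bat a in blast)
      then have "(\<Sum>H\<in>C. c H *\<^sub>R vvec H) $ b = 0" using c(1) by simp
      then have "c H = 0" using comb_zero[OF _ c(2) _ bat(1) H(1) bat(2)] by simp
      then show False using H by simp
    qed
  qed
  then have "H \<le> a" using atoms_le[OF at] by blast
  then have "H = a" using H(2) by simp
  then show ?thesis using H by simp
qed

lemma nested_subset:
  assumes N: "nested \<G> S" and TS: "T \<subseteq> S"
  shows "nested \<G> T"
proof -
  have 1: "S \<subseteq> \<G>" and 2: "\<And>U. U \<subseteq> S \<Longrightarrow> 2 \<le> card U \<Longrightarrow>
      (\<forall>G\<in>U. \<forall>H\<in>U. G \<noteq> H \<longrightarrow> \<not> G \<le> H) \<Longrightarrow> Sup U \<notin> \<G>"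
    using N unfolding nested_def by blast+
  show ?thesis unfolding nested_def
  proof (intro conjI allI impI)
    show "T \<subseteq> \<G>" using 1 TS by (rule order_trans[rotated])
  next
    fix U assume "U \<subseteq> T" and h: "2 \<le> card U \<and> (\<forall>G\<in>U. \<forall>H\<in>U. G \<noteq> H \<longrightarrow> \<not> G \<le> H)"
    have "U \<subseteq> S" using \<open>U \<subseteq> T\<close> TS by (rule order_trans)
    then show "Sup U \<notin> \<G>" using 2 h by blast
  qed
qed

lemma nested_lemma:
  assumes at: "atomic_lattice TYPE('a::{finite,complete_lattice})"
    and bG: "bot \<notin> \<G>" and N: "nested \<G> (S::'a set)" and HG: "H \<in> \<G>" and v: "vvec H \<in> Vcone S"
  shows "H \<in> S"
proof (rule ccontr)
  assume HS: "H \<notin> S"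
  have SG: "S \<subseteq> \<G>" using N nested_def by blast
  obtain c where c: "vvec H = (\<Sum>G\<in>S. c G *\<^sub>R vvec G)" "\<forall>G\<in>S. 0 \<le> c G"
    using Vcone_memE[OF at v] by blast
  define S' where "S' = {G\<in>S. c G \<noteq> 0}"
  have le: "G \<le> H" if G: "G \<in> S'" for G
  proof -
    have "atoms_below G \<subseteq> atoms_below H"
    proof
      fix b assume b: "b \<in> atoms_below G"
      show "b \<in> atoms_below H"
      proof (rule ccontr)
        assume "b \<notin> atoms_below H"
        have bat: "is_atom b" "b \<le> G" using b by (auto simp: atoms_below_def)
        have "\<not> b \<le> H" using \<open>b \<notin> atoms_below H\<close> bat by (auto simp: atoms_below_def)
        then have "vvec H $ b = 0" by (simp add: vvec_nth)
        then have "(\<Sum>G\<in>S. c G *\<^sub>R vvec G) $ b = 0" using c(1) by simp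
        moreover have "G \<in> S" using G by (simp add: S'_def)
        ultimately have "c G = 0" using comb_zero[OF _ c(2) _ bat(1) _ bat(2)] by simp
        then show False using G by (simp add: S'_def)
      qed
    qed
    then show ?thesis using atoms_le[OF at] by blast
  qed
  have cov: "\<exists>G\<in>S'. b \<le> G" if b: "b \<in> atoms_below H" for b
  proof -
    have "vvec H $ b \<noteq> 0" using b by (simp add: vvec_nth atoms_below_def)
    then obtain G where "G \<in> S" "b \<le> G" "c G \<noteq> 0" using comb_nonzero c(1) by metis
    then show ?thesis unfolding S'_def by blast
  qed
  have HSup: "H = Sup S'"
  proof (rule order_antisym)
    have "Sup (atoms_below H) \<le> Sup S'"
    proof (rule Sup_least)
      fix b assume "b \<in> atoms_below H"
      then obtain G where "G \<in> S'" "b \<le> G" using cov by blast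
      then show "b \<le> Sup S'" using Sup_upper order_trans by blast
    qed
    then show "H \<le> Sup S'" using atomic_Sup[OF at, of H] by (rule ord_eq_le_trans[rotated])
    show "Sup S' \<le> H" using le by (intro Sup_least) blast
  qed
  have "H \<noteq> bot" using bG HG by auto
  then obtain b where b: "is_atom b" "b \<le> H" using ex_atom[OF at] by blast
  then have S'ne: "S' \<noteq> {}" using cov[of b] by (auto simp: atoms_below_def)
  define M where "M = {G\<in>S'. \<forall>G'\<in>S'. G \<le> G' \<longrightarrow> G = G'}"
  have finS': "finite S'" by simp
  have below: "\<exists>m\<in>M. G \<le> m" if "G \<in> S'" for G
    using finite_has_maximal2[OF finS' that] unfolding M_def by blast
  have MS': "M \<subseteq> S'" unfolding M_def by blast
  have SupM: "Sup M = H"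
  proof (rule order_antisym)
    show "Sup M \<le> H" using MS' le by (intro Sup_least) blast
    show "H \<le> Sup M" unfolding HSup
    proof (rule Sup_least)
      fix G assume "G \<in> S'"
      then obtain m where "m \<in> M" "G \<le> m" using below by blast
      then show "G \<le> Sup M" using Sup_upper order_trans by blast
    qed
  qed
  have Mne: "M \<noteq> {}" using below S'ne by blast
  show False
  proof (cases "\<exists>m. M = {m}")
    case True
    then obtain m where "M = {m}" by blast
    then have "H = m" using SupM by simp
    then have "H \<in> S" using \<open>M = {m}\<close> MS' unfolding S'_def by auto
    then show False using HS by simp
  next
    case False
    have "2 \<le> card M"
    proof -
      have "card M \<noteq> 0" using Mne by simp
      moreover have "card M \<noteq> 1" using False by (metis card_1_singletonE)
      ultimately show ?thesis by linarith
    qed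
    moreover have "\<forall>G\<in>M. \<forall>G'\<in>M. G \<noteq> G' \<longrightarrow> \<not> G \<le> G'"
      unfolding M_def by blast
    moreover have "M \<subseteq> S" using MS' unfolding S'_def by blast
    ultimately have "Sup M \<notin> \<G>" using N unfolding nested_def by blast
    then show False using SupM HG by simp
  qed
qed



lemma bs_bot: "building_set \<G> \<Longrightarrow> bot \<notin> \<G>"
  unfolding building_set_def by blast

lemma bs_unfold:
  assumes "building_set \<G>" "X \<noteq> bot"
  defines "M \<equiv> {G \<in> \<G>. G \<le> X \<and> \<not>(\<exists>H\<in>\<G>. H \<le> X \<and> G < H)}"
  defines "P \<equiv> {f. (\<forall>G\<in>M. f G \<le> G) \<and> (\<forall>G. G \<notin> M \<longrightarrow> f G = bot)}"
  shows "\<exists>\<phi>. bij_betw \<phi> P {bot..X} \<and>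
              (\<forall>f\<in>P. \<forall>g\<in>P. (\<forall>G\<in>M. f G \<le> g G) \<longleftrightarrow> \<phi> f \<le> \<phi> g) \<and>
              (\<forall>G\<in>M. \<phi> (\<lambda>H. if H = G then G else bot) = G)"
proof -
  have "\<forall>X. X \<noteq> bot \<longrightarrow>
      (let M = {G \<in> \<G>. G \<le> X \<and> \<not>(\<exists>H\<in>\<G>. H \<le> X \<and> G < H)};
           P = {f. (\<forall>G\<in>M. f G \<le> G) \<and> (\<forall>G. G \<notin> M \<longrightarrow> f G = bot)}
       in \<exists>\<phi>. bij_betw \<phi> P {bot..X} \<and>
              (\<forall>f\<in>P. \<forall>g\<in>P. (\<forall>G\<in>M. f G \<le> g G) \<longleftrightarrow> \<phi> f \<le> \<phi> g) \<and>
              (\<forall>G\<in>M. \<phi> (\<lambda>H. if H = G then G else bot) = G))"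
    using assms(1) unfolding building_set_def by blast
  then have "let M = {G \<in> \<G>. G \<le> X \<and> \<not>(\<exists>H\<in>\<G>. H \<le> X \<and> G < H)};
           P = {f. (\<forall>G\<in>M. f G \<le> G) \<and> (\<forall>G. G \<notin> M \<longrightarrow> f G = bot)}
       in \<exists>\<phi>. bij_betw \<phi> P {bot..X} \<and>
              (\<forall>f\<in>P. \<forall>g\<in>P. (\<forall>G\<in>M. f G \<le> g G) \<longleftrightarrow> \<phi> f \<le> \<phi> g) \<and>
              (\<forall>G\<in>M. \<phi> (\<lambda>H. if H = G then G else bot) = G)"
    using assms(2) by blast
  then show ?thesis unfolding Let_def M_def P_def .
qed

lemma bs_atom:
  assumes bs: "building_set (\<G>::'a::complete_lattice set)" and a: "is_atom a"
  shows "a \<in> \<G>"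
proof -
  have ab: "a \<noteq> bot" using a unfolding is_atom_def by blast
  define M where "M = {G \<in> \<G>. G \<le> a \<and> \<not>(\<exists>H\<in>\<G>. H \<le> a \<and> G < H)}"
  define P where "P = {f. (\<forall>G\<in>M. f G \<le> G) \<and> (\<forall>G. G \<notin> M \<longrightarrow> f (G::'a) = (bot::'a))}"
  obtain \<phi> where bij: "bij_betw \<phi> P {bot..a}"
    using bs_unfold[OF bs ab] unfolding M_def P_def by blast
  show ?thesis
  proof (cases "M = {}")
    case True
    then have P1: "\<forall>f\<in>P. f = (\<lambda>_. bot)" unfolding P_def by auto
    have "bot \<in> \<phi> ` P" "a \<in> \<phi> ` P" using bij unfolding bij_betw_def by auto
    then obtain f1 f2 where ff: "f1 \<in> P" "f2 \<in> P" "bot = \<phi> f1" "a = \<phi> f2" by blast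
    have "f1 = (\<lambda>_. bot)" "f2 = (\<lambda>_. bot)" using P1 ff(1,2) by blast+
    then have "f1 = f2" by simp
    then have "a = bot" using ff(3,4) by simp
    then show ?thesis using ab by simp
  next
    case False
    then obtain G where G: "G \<in> M" by blast
    then have "G \<in> \<G>" "G \<le> a" unfolding M_def by auto
    moreover have "G \<noteq> bot" using bs_bot[OF bs] \<open>G \<in> \<G>\<close> by auto
    ultimately have "G = a" using a unfolding is_atom_def by blast
    then show ?thesis using \<open>G \<in> \<G>\<close> by simp
  qed
qed

lemma bs_join:
  assumes bs: "building_set (\<G>::'a::{finite,complete_lattice} set)"
    and G: "G \<in> \<G>" and J: "J \<in> \<G>" and GJ: "inf G J \<noteq> bot"
  shows "sup G J \<in> \<G>"
proof -
  define X where "X = sup G J"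
  have Xb: "X \<noteq> bot" using GJ unfolding X_def
    by (metis bot.extremum_uniqueI inf_le1 sup_eq_bot_iff)
  define M where "M = {G \<in> \<G>. G \<le> X \<and> \<not>(\<exists>H\<in>\<G>. H \<le> X \<and> G < H)}"
  define P where "P = {f. (\<forall>G\<in>M. f G \<le> G) \<and> (\<forall>G. G \<notin> M \<longrightarrow> f (G::'a) = (bot::'a))}"
  obtain \<phi> where bij: "bij_betw \<phi> P {bot..X}"
    and ord: "\<forall>f\<in>P. \<forall>g\<in>P. (\<forall>G\<in>M. f G \<le> g G) \<longleftrightarrow> \<phi> f \<le> \<phi> g"
    and unit: "\<forall>G\<in>M. \<phi> (\<lambda>H. if H = G then G else bot) = G"
    using bs_unfold[OF bs Xb] unfolding M_def P_def by blast
  have maxi: "\<exists>m\<in>M. K \<le> m" if K: "K \<in> \<G>" "K \<le> X" for K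
  proof -
    have fin: "finite {H \<in> \<G>. H \<le> X}" by simp
    obtain m where m: "m \<in> {H \<in> \<G>. H \<le> X}" "K \<le> m"
      "\<forall>b\<in>{H \<in> \<G>. H \<le> X}. m \<le> b \<longrightarrow> m = b"
      using finite_has_maximal2[OF fin, of K] K by blast
    have "m \<in> M" unfolding M_def using m by (auto simp: less_le)
    then show ?thesis using m(2) by blast
  qed
  obtain m1 where m1: "m1 \<in> M" "G \<le> m1" using maxi[OF G] unfolding X_def by auto
  obtain m2 where m2: "m2 \<in> M" "J \<le> m2" using maxi[OF J] unfolding X_def by auto
  show ?thesis
  proof (cases "m1 = m2")
    case True
    have "m1 \<le> X" using m1 unfolding M_def by auto
    moreover have "X \<le> m1" unfolding X_def using m1 m2 True by simp
    ultimately have "X = m1" by simp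
    then show ?thesis using m1 unfolding M_def X_def by auto
  next
    case False
    define u where "u m = (\<lambda>H. if H = m then m else (bot::'a))" for m
    have uP: "u m \<in> P" if "m \<in> M" for m
      using that unfolding u_def P_def by auto
    have surj: "\<phi> ` P = {bot..X}" using bij unfolding bij_betw_def by blast
    have "G \<in> {bot..X}" unfolding X_def by simp
    then obtain f where f: "f \<in> P" "\<phi> f = G" using surj by (metis imageE)
    have "J \<in> {bot..X}" unfolding X_def by simp
    then obtain g where g: "g \<in> P" "\<phi> g = J" using surj by (metis imageE)
    have "\<phi> f \<le> \<phi> (u m1)" using f m1 unit unfolding u_def by simp
    then have fle: "\<forall>H\<in>M. f H \<le> u m1 H" using ord f(1) uP[OF m1(1)] by blast
    have f0: "f H = bot" if "H \<in> M" "H \<noteq> m1" for H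
      using fle that unfolding u_def by (metis bot.extremum_uniqueI)
    have "\<phi> g \<le> \<phi> (u m2)" using g m2 unit unfolding u_def by simp
    then have gle: "\<forall>H\<in>M. g H \<le> u m2 H" using ord g(1) uP[OF m2(1)] by blast
    have g0: "g m1 = bot"
      using gle m1(1) False unfolding u_def by (metis bot.extremum_uniqueI)
    have "inf G J \<in> {bot..X}" unfolding X_def by (simp add: le_supI1)
    then obtain k where k: "k \<in> P" "\<phi> k = inf G J" using surj by (metis imageE)
    have "\<phi> k \<le> \<phi> f" "\<phi> k \<le> \<phi> g" using k f g by simp_all
    then have kf: "\<forall>H\<in>M. k H \<le> f H" and kg: "\<forall>H\<in>M. k H \<le> g H"
      using ord k(1) f(1) g(1) by blast+
    have kz: "k = (\<lambda>_. bot)"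
    proof
      fix H show "k H = bot"
      proof (cases "H \<in> M")
        case True
        show ?thesis
        proof (cases "H = m1")
          case True then show ?thesis using kg g0 m1(1) by (metis bot.extremum_uniqueI)
        next
          case False then show ?thesis using kf f0 \<open>H \<in> M\<close> by (metis bot.extremum_uniqueI)
        qed
      next
        case False then show ?thesis using k(1) unfolding P_def by blast
      qed
    qed
    have "bot \<in> {bot..X}" by simp
    then obtain h where h: "h \<in> P" "\<phi> h = bot" using surj by (metis imageE)
    have "\<forall>H\<in>M. k H \<le> h H" using kz by simp
    then have "\<phi> k \<le> \<phi> h" using ord k(1) h(1) by blast
    then have "inf G J \<le> bot" using k h by simp
    then have "inf G J = bot" by (rule bot.extremum_uniqueI)
    then show ?thesis using GJ by simp
  qed
qed



lemma nestedD:
  "nested \<G> S \<Longrightarrow> T \<subseteq> S \<Longrightarrow> 2 \<le> card T \<Longrightarrow> (\<forall>G\<in>T. \<forall>H\<in>T. G \<noteq> H \<longrightarrow> \<not> G \<le> H) \<Longrightarrow> Sup T \<notin> \<G>"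
  unfolding nested_def by blast

lemma nestedD2: "nested \<G> S \<Longrightarrow> S \<subseteq> \<G>"
  unfolding nested_def by blast

lemma nestedI:
  assumes "S \<subseteq> \<G>"
    "\<And>T. T \<subseteq> S \<Longrightarrow> 2 \<le> card T \<Longrightarrow> (\<forall>G\<in>T. \<forall>H\<in>T. G \<noteq> H \<longrightarrow> \<not> G \<le> H) \<Longrightarrow> Sup T \<notin> \<G>"
  shows "nested \<G> S"
  unfolding nested_def
proof (intro conjI allI impI)
  show "S \<subseteq> \<G>" by (rule assms(1))
next
  fix T assume h1: "T \<subseteq> S" and h2: "2 \<le> card T \<and> (\<forall>G\<in>T. \<forall>H\<in>T. G \<noteq> H \<longrightarrow> \<not> G \<le> H)"
  show "Sup T \<notin> \<G>" using assms(2)[OF h1 conjunct1[OF h2] conjunct2[OF h2]] .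
qed

lemma nested_mono:
  assumes "nested \<G>1 S" "S \<subseteq> \<G>2" "\<G>2 \<subseteq> \<G>1"
  shows "nested \<G>2 S"
proof (rule nestedI[OF assms(2)])
  fix T assume h: "T \<subseteq> S" "2 \<le> card T" "\<forall>G\<in>T. \<forall>H\<in>T. G \<noteq> H \<longrightarrow> \<not> G \<le> H"
  have "Sup T \<notin> \<G>1" using nestedD[OF assms(1) h] .
  then show "Sup T \<notin> \<G>2" using assms(3) by blast
qed

definition cst :: "'a::complete_lattice set set \<Rightarrow> 'a \<Rightarrow> 'a set set" where
  "cst F G = {C \<in> F. \<not> atoms_below G \<subseteq> C}
     \<union> {insert G \<rho> | C \<rho>. C \<in> F \<and> atoms_below G \<subseteq> C \<and> \<rho> \<subseteq> C \<and> \<not> atoms_below G \<subseteq> \<rho>}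
     \<union> {\<rho> | C \<rho>. C \<in> F \<and> atoms_below G \<subseteq> C \<and> \<rho> \<subseteq> C \<and> \<not> atoms_below G \<subseteq> \<rho>}"

lemma cst_I1: "C \<in> F \<Longrightarrow> \<not> atoms_below G \<subseteq> C \<Longrightarrow> C \<in> cst F G"
  unfolding cst_def by (intro UnI1) simp

lemma cst_I2: "\<sigma> \<in> F \<Longrightarrow> atoms_below G \<subseteq> \<sigma> \<Longrightarrow> \<rho> \<subseteq> \<sigma> \<Longrightarrow> \<not> atoms_below G \<subseteq> \<rho>
  \<Longrightarrow> insert G \<rho> \<in> cst F G"
  unfolding cst_def by (intro UnI1 UnI2 CollectI exI conjI) (rule refl)

lemma cst_I3: "\<sigma> \<in> F \<Longrightarrow> atoms_below G \<subseteq> \<sigma> \<Longrightarrow> \<rho> \<subseteq> \<sigma> \<Longrightarrow> \<not> atoms_below G \<subseteq> \<rho>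
  \<Longrightarrow> \<rho> \<in> cst F G"
  unfolding cst_def by (intro UnI2 CollectI exI conjI) (rule refl)

lemma two_atoms:
  assumes at: "atomic_lattice TYPE('a::{finite,complete_lattice})"
    and nb: "(G::'a) \<noteq> bot" and na: "\<not> is_atom G"
  shows "2 \<le> card (atoms_below G)"
proof -
  obtain a where a: "is_atom a" "a \<le> G" using ex_atom[OF at nb] by blast
  have "atoms_below G \<noteq> {a}"
  proof
    assume "atoms_below G = {a}"
    then have "G = Sup {a}" using atomic_Sup[OF at, of G] by simp
    then have "G = a" by simp
    then show False using na a by simp
  qed
  moreover have "a \<in> atoms_below G" using a by (simp add: atoms_below_def)
  ultimately obtain b where b: "b \<in> atoms_below G" "b \<noteq> a" by blast
  have "{a, b} \<subseteq> atoms_below G" using a b by (auto simp: atoms_below_def)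
  then have "card {a, b} \<le> card (atoms_below G)" by (intro card_mono) auto
  then show ?thesis using b(2) by simp
qed

lemma atoms_antichain:
  "\<forall>x\<in>atoms_below G. \<forall>y\<in>atoms_below G. x \<noteq> y \<longrightarrow> \<not> x \<le> y"
  unfolding atoms_below_def using atom_le_atom by blast

lemma comb_step:
  fixes G :: "'a::{finite,complete_lattice}"
  assumes at: "atomic_lattice TYPE('a)" and bs: "building_set \<G>"
    and GG: "G \<in> \<G>" and PG: "P \<subseteq> \<G>"
    and above: "\<forall>H\<in>\<G>. G < H \<longrightarrow> H \<in> P"
    and notbelow: "\<forall>J\<in>P. \<not> J \<le> G"
    and IH: "\<And>S. nested ({a. is_atom a} \<union> P) S \<Longrightarrow> S \<in> F"
    and NC: "nested ({a. is_atom a} \<union> insert G P) C"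
  shows "C \<in> cst F G"
proof -
  define A where "A = {a::'a. is_atom a}"
  have AG: "A \<subseteq> \<G>" unfolding A_def using bs_atom[OF bs] by blast
  have bG: "bot \<notin> \<G>" using bs_bot[OF bs] .
  have CG: "C \<subseteq> A \<union> insert G P" using nestedD2[OF NC] unfolding A_def .
  show ?thesis
  proof (cases "is_atom G")
    case True
    have eq: "A \<union> insert G P = A \<union> P" using True unfolding A_def by blast
    have "C \<in> F" by (rule IH[folded A_def, OF NC[folded A_def, unfolded eq]])
    have abG: "atoms_below G = {G}" by (rule atoms_below_atom[OF True])
    show ?thesis
    proof (cases "G \<in> C")
      case False
      then have "\<not> atoms_below G \<subseteq> C" using abG by simp
      then show ?thesis using \<open>C \<in> F\<close> by (intro cst_I1)
    next
      case True
      have "insert G (C - {G}) = C" using True by blast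
      moreover have "insert G (C - {G}) \<in> cst F G"
        using \<open>C \<in> F\<close> True abG by (intro cst_I2[of C]) auto
      ultimately show ?thesis by simp
    qed
  next
    case False
    have Gb: "G \<noteq> bot" using GG bG by blast
    have abnot: "\<not> atoms_below G \<subseteq> C"
    proof
      assume sub: "atoms_below G \<subseteq> C"
      have "Sup (atoms_below G) \<notin> A \<union> insert G P"
        using nestedD[OF NC[folded A_def] sub two_atoms[OF at Gb False] atoms_antichain] .
      moreover have "Sup (atoms_below G) = G" using atomic_Sup[OF at, of G] by simp
      ultimately show False by simp
    qed
    show ?thesis
    proof (cases "G \<in> C")
      case False
      then have "C \<subseteq> A \<union> P" using CG by blast
      then have "nested (A \<union> P) C" using nested_mono[OF NC[folded A_def]] by blast
      then have "C \<in> F" by (rule IH[folded A_def])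
      then show ?thesis using abnot by (rule cst_I1)
    next
      case True
      define \<rho> where "\<rho> = C - {G}"
      define \<sigma> where "\<sigma> = \<rho> \<union> atoms_below G"
      have \<rho>C: "\<rho> \<subseteq> C" unfolding \<rho>_def by blast
      have \<rho>AP: "\<rho> \<subseteq> A \<union> P" using CG unfolding \<rho>_def by blast
      have abA: "atoms_below G \<subseteq> A" unfolding A_def atoms_below_def by blast
      have \<sigma>AP: "\<sigma> \<subseteq> A \<union> P" unfolding \<sigma>_def using \<rho>AP abA by blast
      have APG: "A \<union> P \<subseteq> \<G>" using AG PG by blast
      have "nested (A \<union> P) \<sigma>"
      proof (rule nestedI[OF \<sigma>AP])
        fix T assume T\<sigma>: "T \<subseteq> \<sigma>" and cT: "2 \<le> card T"
          and anti: "\<forall>x\<in>T. \<forall>y\<in>T. x \<noteq> y \<longrightarrow> \<not> x \<le> y"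
        show "Sup T \<notin> A \<union> P"
        proof
          assume J: "Sup T \<in> A \<union> P"
          show False
          proof (cases "T \<subseteq> \<rho>")
            case True
            then have "T \<subseteq> C" using \<rho>C by blast
            then have "Sup T \<notin> A \<union> insert G P" using nestedD[OF NC[folded A_def] _ cT anti] by blast
            then show False using J by blast
          next
            case False
            then obtain a where aT: "a \<in> T" and a\<rho>: "a \<notin> \<rho>" by blast
            then have aG: "a \<in> atoms_below G" using T\<sigma> unfolding \<sigma>_def by blast
            then have aat: "is_atom a" "a \<le> G" unfolding atoms_below_def by auto
            show False
            proof (cases "\<forall>H\<in>T. H \<le> G")
              case True
              then have JG: "Sup T \<le> G" by (intro Sup_least) blast
              show False
              proof (cases "Sup T \<in> P")
                case True then show False using notbelow JG by blast
              next
                case False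
                then have Jat: "is_atom (Sup T)" using J unfolding A_def by blast
                have "T \<noteq> {}" using cT by auto
                have "\<exists>x y. x \<in> T \<and> y \<in> T \<and> x \<noteq> y"
                proof (rule ccontr)
                  assume "\<not> (\<exists>x y. x \<in> T \<and> y \<in> T \<and> x \<noteq> y)"
                  then have "card T \<le> 1" using card_le_Suc0_iff_eq[of T] by auto
                  then show False using cT by simp
                qed
                then obtain x y where xy: "x \<in> T" "y \<in> T" "x \<noteq> y" by blast
                have "x \<noteq> bot" "y \<noteq> bot" using xy T\<sigma> \<sigma>AP APG bG by blast+
                moreover have "x \<le> Sup T" "y \<le> Sup T" using xy by (auto intro: Sup_upper)
                ultimately have "x = Sup T" "y = Sup T" using Jat unfolding is_atom_def by blast+
                then show False using xy by simp
              qed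
            next
              case False
              then obtain H0 where H0: "H0 \<in> T" "\<not> H0 \<le> G" by blast
              define T' where "T' = insert G {H \<in> T. \<not> H \<le> G}"
              have T'C: "T' \<subseteq> C"
              proof -
                have "{H \<in> T. \<not> H \<le> G} \<subseteq> \<rho>"
                  using T\<sigma> unfolding \<sigma>_def atoms_below_def by blast
                then show ?thesis unfolding T'_def using \<rho>C True by blast
              qed
              have "finite T'" by simp
              have "G \<noteq> H0" using H0 by blast
              have "{G, H0} \<subseteq> T'" unfolding T'_def using H0 by blast
              then have "card {G, H0} \<le> card T'" using \<open>finite T'\<close> by (intro card_mono)
              then have cT': "2 \<le> card T'" using \<open>G \<noteq> H0\<close> by simp
              have anti': "\<forall>x\<in>T'. \<forall>y\<in>T'. x \<noteq> y \<longrightarrow> \<not> x \<le> y"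
              proof (intro ballI impI)
                fix x y assume x: "x \<in> T'" and y: "y \<in> T'" and xy: "x \<noteq> y"
                have noGH: "\<not> G \<le> H" if "H \<in> T" "\<not> H \<le> G" for H
                proof
                  assume "G \<le> H"
                  then have "a \<le> H" using aat(2) by (rule order_trans[rotated])
                  moreover have "H \<in> \<rho>" using that T\<sigma> unfolding \<sigma>_def atoms_below_def by blast
                  then have "a \<noteq> H" using a\<rho> by blast
                  ultimately show False using anti aT that(1) by blast
                qed
                show "\<not> x \<le> y"
                  using x y xy noGH anti unfolding T'_def by blast
              qed
              have supT': "Sup T' = sup G (Sup T)"
              proof (rule order_antisym)
                show "Sup T' \<le> sup G (Sup T)"
                proof (rule Sup_least)
                  fix x assume "x \<in> T'"
                  then have "x = G \<or> x \<in> T" unfolding T'_def by blast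
                  then show "x \<le> sup G (Sup T)" by (auto intro: le_supI2 Sup_upper)
                qed
                have GT': "G \<le> Sup T'" unfolding T'_def by (auto intro: Sup_upper)
                have "Sup T \<le> Sup T'"
                proof (rule Sup_least)
                  fix x assume xT: "x \<in> T"
                  show "x \<le> Sup T'"
                  proof (cases "x \<le> G")
                    case True then show ?thesis using GT' by (rule order_trans)
                  next
                    case False then have "x \<in> T'" unfolding T'_def using xT by blast
                    then show ?thesis by (rule Sup_upper)
                  qed
                qed
                then show "sup G (Sup T) \<le> Sup T'" using GT' by simp
              qed
              have aJ: "a \<le> Sup T" using aT by (rule Sup_upper)
              have "inf G (Sup T) \<noteq> bot"
              proof
                assume "inf G (Sup T) = bot"
                moreover have "a \<le> inf G (Sup T)" using aat(2) aJ by simp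
                ultimately have "a = bot" by (simp add: bot_unique)
                then show False using aat(1) unfolding is_atom_def by blast
              qed
              moreover have "Sup T \<in> \<G>" using J APG by blast
              ultimately have sG: "sup G (Sup T) \<in> \<G>" using bs_join[OF bs GG] by blast
              have "Sup T' \<in> A \<union> insert G P"
              proof (cases "sup G (Sup T) = G")
                case True then show ?thesis using supT' by simp
              next
                case False
                then have "G < sup G (Sup T)" by (simp add: less_le)
                then have "sup G (Sup T) \<in> P" using above sG by blast
                then show ?thesis using supT' by simp
              qed
              moreover have "Sup T' \<notin> A \<union> insert G P"
                using nestedD[OF NC[folded A_def] T'C cT' anti'] .
              ultimately show False by simp
            qed
          qed
        qed
      qed
      then have "\<sigma> \<in> F" by (rule IH[folded A_def])
      moreover have "atoms_below G \<subseteq> \<sigma>" "\<rho> \<subseteq> \<sigma>" unfolding \<sigma>_def by blast+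
      moreover have "\<not> atoms_below G \<subseteq> \<rho>" using abnot \<rho>C by blast
      moreover have "insert G \<rho> = C" using True unfolding \<rho>_def by blast
      ultimately show ?thesis using cst_I2[of \<sigma> F G \<rho>] by simp
    qed
  qed
qed



lemma finite_vimg: "finite (vvec ` (C::'a::{finite,complete_lattice} set))"
  by simp

lemma faces_Vcone:
  assumes ind: "independent (vvec ` (C::'a::{finite,complete_lattice} set))"
  shows "faces (Vcone C) = Vcone ` Pow C"
proof -
  have "faces (Vcone C) = cone_span ` Pow (vvec ` C)"
    unfolding Vcone_def by (rule faces_cs[OF finite_vimg ind])
  also have "\<dots> = Vcone ` Pow C"
  proof
    show "cone_span ` Pow (vvec ` C) \<subseteq> Vcone ` Pow C"
    proof
      fix x assume "x \<in> cone_span ` Pow (vvec ` C)"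
      then obtain X where X: "X \<subseteq> vvec ` C" "x = cone_span X" by blast
      then obtain D where D: "D \<subseteq> C" "X = vvec ` D" by (meson subset_imageE)
      then show "x \<in> Vcone ` Pow C" using X unfolding Vcone_def by blast
    qed
  next
    show "Vcone ` Pow C \<subseteq> cone_span ` Pow (vvec ` C)"
      unfolding Vcone_def by blast
  qed
  finally show ?thesis .
qed

lemma Vcone_ne: "Vcone C \<noteq> {}"
  unfolding Vcone_def using convex_cone_contains_0[OF cs_convex_cone] by blast

lemma vvec_in_Vcone: "H \<in> C \<Longrightarrow> vvec H \<in> Vcone (C::'a::{finite,complete_lattice} set)"
  unfolding Vcone_def by (rule cs_base) auto

lemma Vcone_mono: "D \<subseteq> C \<Longrightarrow> Vcone D \<subseteq> Vcone (C::'a::{finite,complete_lattice} set)"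
  unfolding Vcone_def by (rule cs_mono) auto

lemma sub_iff:
  assumes at: "atomic_lattice TYPE('a::{finite,complete_lattice})" and Db: "bot \<notin> (D::'a set)"
  shows "Vcone (atoms_below G) \<subseteq> Vcone D \<longleftrightarrow> atoms_below G \<subseteq> D"
proof
  assume sub: "Vcone (atoms_below G) \<subseteq> Vcone D"
  show "atoms_below G \<subseteq> D"
  proof
    fix a assume a: "a \<in> atoms_below G"
    then have "vvec a \<in> Vcone D" using sub vvec_in_Vcone by blast
    then show "a \<in> D" using label_lemma[OF at Db] a unfolding atoms_below_def by blast
  qed
next
  assume "atoms_below G \<subseteq> D"
  then show "Vcone (atoms_below G) \<subseteq> Vcone D" by (rule Vcone_mono)
qed

lemma face_iff:
  assumes at: "atomic_lattice TYPE('a::{finite,complete_lattice})" and Cb: "bot \<notin> (C::'a set)"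
    and ind: "independent (vvec ` C)"
  shows "Vcone (atoms_below G) face_of Vcone C \<longleftrightarrow> atoms_below G \<subseteq> C"
proof
  assume f: "Vcone (atoms_below G) face_of Vcone C"
  then have "Vcone (atoms_below G) \<in> faces (Vcone C)" unfolding faces_def using Vcone_ne by blast
  then obtain D where D: "D \<subseteq> C" "Vcone (atoms_below G) = Vcone D"
    unfolding faces_Vcone[OF ind] by blast
  have "bot \<notin> D" using D Cb by blast
  then have "atoms_below G \<subseteq> D" using sub_iff[OF at] D(2) by blast
  then show "atoms_below G \<subseteq> C" using D(1) by blast
next
  assume "atoms_below G \<subseteq> C"
  then have "Vcone (atoms_below G) \<in> faces (Vcone C)" unfolding faces_Vcone[OF ind] by blast
  then show "Vcone (atoms_below G) face_of Vcone C" unfolding faces_def by blast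
qed

lemma add_ray_cs:
  fixes W :: "'n::real_vector set"
  assumes fin: "finite W"
  shows "add_ray (cone_span W) v = cone_span (insert v W)"
proof
  show "add_ray (cone_span W) v \<subseteq> cone_span (insert v W)"
  proof
    fix y assume "y \<in> add_ray (cone_span W) v"
    then obtain x t where xt: "y = x + t *\<^sub>R v" "x \<in> cone_span W" "0 \<le> t"
      unfolding add_ray_def by blast
    have "x \<in> cone_span (insert v W)" using xt(2) cs_mono[of "insert v W" W] fin by blast
    moreover have "t *\<^sub>R v \<in> cone_span (insert v W)"
      using cs_base[of "insert v W" v] fin xt(3) cs_convex_cone convex_cone_scaleR by blast
    ultimately show "y \<in> cone_span (insert v W)"
      using xt(1) cs_convex_cone convex_cone_add by blast
  qed
next
  show "cone_span (insert v W) \<subseteq> add_ray (cone_span W) v"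
  proof
    fix y assume y: "y \<in> cone_span (insert v W)"
    then obtain c where c: "y = (\<Sum>w\<in>insert v W. c w *\<^sub>R w)" "\<forall>w\<in>insert v W. 0 \<le> c w"
      by (rule cs_memE)
    show "y \<in> add_ray (cone_span W) v"
    proof (cases "v \<in> W")
      case True
      then have "insert v W = W" by blast
      then have "y \<in> cone_span W" using y by simp
      then have "y = y + 0 *\<^sub>R v \<and> y \<in> cone_span W \<and> (0::real) \<le> 0" by simp
      then show ?thesis unfolding add_ray_def by blast
    next
      case False
      have "y = (\<Sum>w\<in>W. c w *\<^sub>R w) + c v *\<^sub>R v"
        using c(1) False fin by (simp add: add.commute)
      moreover have "(\<Sum>w\<in>W. c w *\<^sub>R w) \<in> cone_span W"
        by (rule cs_memI[where c=c]) (use c(2) in auto)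
      moreover have "0 \<le> c v" using c(2) by simp
      ultimately show ?thesis unfolding add_ray_def by blast
    qed
  qed
qed

lemma add_ray_Vcone:
  "add_ray (Vcone D) (vvec G) = Vcone (insert G (D::'a::{finite,complete_lattice} set))"
  unfolding Vcone_def by (simp add: add_ray_cs)

definition invF :: "'a::{finite,complete_lattice} set set \<Rightarrow> 'a set \<Rightarrow> bool" where
  "invF F \<G> \<longleftrightarrow> (\<forall>C\<in>F. C \<subseteq> \<G> \<and> independent (vvec ` C))"

lemma geo_step:
  assumes at: "atomic_lattice TYPE('a::{finite,complete_lattice})"
    and inv: "invF F \<G>" and bG: "bot \<notin> \<G>" and GG: "(G::'a) \<in> \<G>"
  shows "stellar (Vcone ` F) (Vcone (atoms_below G)) (vvec G) = Vcone ` cst F G"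
proof -
  have Cb: "bot \<notin> C" if "C \<in> F" for C using inv that bG unfolding invF_def by blast
  have ind: "independent (vvec ` C)" if "C \<in> F" for C using inv that unfolding invF_def by blast
  have fi: "Vcone (atoms_below G) face_of Vcone C \<longleftrightarrow> atoms_below G \<subseteq> C" if "C \<in> F" for C
    using face_iff[OF at Cb[OF that] ind[OF that]] .
  have si: "Vcone (atoms_below G) \<subseteq> Vcone D \<longleftrightarrow> atoms_below G \<subseteq> D" if "C \<in> F" "D \<subseteq> C" for C D
    using sub_iff[OF at] Cb[OF that(1)] that(2) by blast
  have fa: "faces (Vcone C) = Vcone ` Pow C" if "C \<in> F" for C using faces_Vcone[OF ind[OF that]] .
  show ?thesis
  proof
    show "stellar (Vcone ` F) (Vcone (atoms_below G)) (vvec G) \<subseteq> Vcone ` cst F G"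
    proof
      fix x assume "x \<in> stellar (Vcone ` F) (Vcone (atoms_below G)) (vvec G)"
      then consider
        (a) "x \<in> Vcone ` F" "\<not> Vcone (atoms_below G) face_of x"
      | (b) \<sigma> \<rho> where "x = add_ray \<rho> (vvec G)" "\<sigma> \<in> Vcone ` F" "Vcone (atoms_below G) face_of \<sigma>"
            "\<rho> \<in> faces \<sigma>" "\<not> Vcone (atoms_below G) \<subseteq> \<rho>"
      | (c) \<sigma> where "x \<in> faces \<sigma>" "\<sigma> \<in> Vcone ` F" "Vcone (atoms_below G) face_of \<sigma>"
            "\<not> Vcone (atoms_below G) \<subseteq> x"
        unfolding stellar_def by blast
      then show "x \<in> Vcone ` cst F G"
      proof cases
        case a
        then obtain C where C: "C \<in> F" "x = Vcone C" by blast
        then have "\<not> atoms_below G \<subseteq> C" using a(2) fi by blast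
        then have "C \<in> cst F G" using C(1) by (intro cst_I1)
        then show ?thesis using C(2) by blast
      next
        case b
        then obtain C where C: "C \<in> F" "\<sigma> = Vcone C" by blast
        then have sub: "atoms_below G \<subseteq> C" using b(3) fi by blast
        obtain D where D: "D \<subseteq> C" "\<rho> = Vcone D" using b(4) fa[OF C(1)] C(2) by blast
        have "\<not> atoms_below G \<subseteq> D" using b(5) D si[OF C(1) D(1)] by blast
        then have "insert G D \<in> cst F G" using C(1) sub D(1) by (intro cst_I2)
        moreover have "x = Vcone (insert G D)" using b(1) D(2) add_ray_Vcone by simp
        ultimately show ?thesis by blast
      next
        case c
        then obtain C where C: "C \<in> F" "\<sigma> = Vcone C" by blast
        then have sub: "atoms_below G \<subseteq> C" using c(3) fi by blast
        obtain D where D: "D \<subseteq> C" "x = Vcone D" using c(1) fa[OF C(1)] C(2) by blast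
        have "\<not> atoms_below G \<subseteq> D" using c(4) D si[OF C(1) D(1)] by blast
        then have "D \<in> cst F G" using C(1) sub D(1) by (intro cst_I3)
        then show ?thesis using D(2) by blast
      qed
    qed
  next
    show "Vcone ` cst F G \<subseteq> stellar (Vcone ` F) (Vcone (atoms_below G)) (vvec G)"
    proof
      fix x assume "x \<in> Vcone ` cst F G"
      then obtain E where E: "E \<in> cst F G" "x = Vcone E" by blast
      from E(1) consider
        (a) "E \<in> F" "\<not> atoms_below G \<subseteq> E"
      | (b) C \<rho> where "E = insert G \<rho>" "C \<in> F" "atoms_below G \<subseteq> C" "\<rho> \<subseteq> C" "\<not> atoms_below G \<subseteq> \<rho>"
      | (c) C where "C \<in> F" "atoms_below G \<subseteq> C" "E \<subseteq> C" "\<not> atoms_below G \<subseteq> E"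
        unfolding cst_def by blast
      then show "x \<in> stellar (Vcone ` F) (Vcone (atoms_below G)) (vvec G)"
      proof cases
        case a
        then have "x \<in> Vcone ` F" "\<not> Vcone (atoms_below G) face_of x" using E(2) fi by auto
        then show ?thesis unfolding stellar_def by blast
      next
        case b
        have s: "Vcone C \<in> Vcone ` F" using b(2) by blast
        have f: "Vcone (atoms_below G) face_of Vcone C" using b(2,3) fi by blast
        have r: "Vcone \<rho> \<in> faces (Vcone C)" using fa[OF b(2)] b(4) by blast
        have n: "\<not> Vcone (atoms_below G) \<subseteq> Vcone \<rho>" using si[OF b(2) b(4)] b(5) by blast
        have "x = add_ray (Vcone \<rho>) (vvec G)" using E(2) b(1) by (simp add: add_ray_Vcone)
        then show ?thesis using s f r n unfolding stellar_def by blast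
      next
        case c
        have s: "Vcone C \<in> Vcone ` F" using c(1) by blast
        have f: "Vcone (atoms_below G) face_of Vcone C" using c(1,2) fi by blast
        have r: "x \<in> faces (Vcone C)" using fa[OF c(1)] c(3) E(2) by blast
        have n: "\<not> Vcone (atoms_below G) \<subseteq> x" using si[OF c(1) c(3)] c(4) E(2) by blast
        show ?thesis using s f r n unfolding stellar_def by blast
      qed
    qed
  qed
qed



lemma indep_insert:
  assumes at: "atomic_lattice TYPE('a::{finite,complete_lattice})"
    and ind: "independent (vvec ` (C::'a set))" and sub: "atoms_below G \<subseteq> C"
    and \<rho>C: "\<rho> \<subseteq> C" and n: "\<not> atoms_below G \<subseteq> \<rho>"
  shows "independent (vvec ` insert G \<rho>)"
proof -
  obtain a0 where a0: "a0 \<in> atoms_below G" "a0 \<notin> \<rho>" using n by blast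
  have a0C: "a0 \<in> C" using a0 sub by blast
  have ind\<rho>: "independent (vvec ` \<rho>)"
    by (rule independent_mono[OF ind]) (use \<rho>C in blast)
  have "vvec G \<notin> span (vvec ` \<rho>)"
  proof
    assume vs: "vvec G \<in> span (vvec ` \<rho>)"
    define R where "R = vvec ` (C - {a0})"
    have "vvec ` \<rho> \<subseteq> R" unfolding R_def using \<rho>C a0(2) by blast
    then have s1: "vvec G \<in> span R" using vs span_mono by blast
    have s2: "(\<Sum>a\<in>atoms_below G - {a0}. vvec a) \<in> span R"
    proof (rule span_sum)
      fix a assume "a \<in> atoms_below G - {a0}"
      then have "vvec a \<in> R" unfolding R_def using sub by blast
      then show "vvec a \<in> span R" by (rule span_base)
    qed
    have "vvec G = vvec a0 + (\<Sum>a\<in>atoms_below G - {a0}. vvec a)"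
      using vvec_sum_atoms[of G] sum.remove[of "atoms_below G" a0 vvec] a0(1) by simp
    then have "vvec a0 = vvec G - (\<Sum>a\<in>atoms_below G - {a0}. vvec a)" by (simp add: algebra_simps)
    then have s3: "vvec a0 \<in> span R" using span_diff[OF s1 s2] by simp
    have "R = vvec ` C - {vvec a0}"
      unfolding R_def using inj_vvec[OF at] by (auto simp: inj_eq)
    then have "dependent (vvec ` C)"
      unfolding dependent_def using s3 a0C by blast
    then show False using ind by simp
  qed
  then have "independent (insert (vvec G) (vvec ` \<rho>))"
    using ind\<rho> by (rule independent_insertI)
  then show ?thesis by simp
qed

lemma inv_step:
  assumes at: "atomic_lattice TYPE('a::{finite,complete_lattice})"
    and inv: "invF F \<G>" and GG: "(G::'a) \<in> \<G>"
  shows "invF (cst F G) \<G>"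
  unfolding invF_def
proof (intro ballI conjI)
  fix E assume "E \<in> cst F G"
  then consider
        (a) "E \<in> F" "\<not> atoms_below G \<subseteq> E"
      | (b) C \<rho> where "E = insert G \<rho>" "C \<in> F" "atoms_below G \<subseteq> C" "\<rho> \<subseteq> C" "\<not> atoms_below G \<subseteq> \<rho>"
      | (c) C where "C \<in> F" "atoms_below G \<subseteq> C" "E \<subseteq> C" "\<not> atoms_below G \<subseteq> E"
    unfolding cst_def by blast
  then have "E \<subseteq> \<G> \<and> independent (vvec ` E)"
  proof cases
    case a then show ?thesis using inv unfolding invF_def by blast
  next
    case b
    have "C \<subseteq> \<G>" "independent (vvec ` C)" using inv b(2) unfolding invF_def by blast+
    then show ?thesis using b GG indep_insert[OF at, of C G \<rho>] by blast
  next
    case c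
    have "C \<subseteq> \<G>" "independent (vvec ` C)" using inv c(1) unfolding invF_def by blast+
    moreover have "vvec ` E \<subseteq> vvec ` C" using c(3) by blast
    ultimately show ?thesis using c(3) independent_mono by blast
  qed
  then show "E \<subseteq> \<G>" "independent (vvec ` E)" by blast+
qed

lemma Theta0_eq:
  assumes at: "atomic_lattice TYPE('a::{finite,complete_lattice})"
  shows "Theta0 TYPE('a) = Vcone ` Pow {a::'a. is_atom a}"
    and "independent (vvec ` {a::'a. is_atom a})"
proof -
  have eq: "{axis a 1 | a::'a. is_atom a} = vvec ` {a::'a. is_atom a}"
    using vvec_atom by force
  have "vvec ` {a::'a. is_atom a} \<subseteq> Basis" using vvec_atom by force
  then show ind: "independent (vvec ` {a::'a. is_atom a})"
    using independent_Basis independent_mono by blast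
  show "Theta0 TYPE('a) = Vcone ` Pow {a::'a. is_atom a}"
    unfolding Theta0_def eq Vcone_def[symmetric] by (rule faces_Vcone[OF ind])
qed

definition Fam :: "'a::{finite,complete_lattice} list \<Rightarrow> 'a set set" where
  "Fam ps = fold (\<lambda>G F. cst F G) ps (Pow {a. is_atom a})"

lemma geo_fold:
  assumes at: "atomic_lattice TYPE('a::{finite,complete_lattice})" and bG: "bot \<notin> (\<G>::'a set)"
  shows "invF F \<G> \<Longrightarrow> set ps \<subseteq> \<G> \<Longrightarrow>
    fold (\<lambda>G \<Theta>. stellar \<Theta> (Vcone (atoms_below G)) (vvec G)) ps (Vcone ` F)
      = Vcone ` fold (\<lambda>G F. cst F G) ps F
    \<and> invF (fold (\<lambda>G F. cst F G) ps F) \<G>"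
proof (induction ps arbitrary: F)
  case Nil then show ?case by simp
next
  case (Cons x xs)
  have xG: "x \<in> \<G>" using Cons.prems(2) by simp
  have st: "stellar (Vcone ` F) (Vcone (atoms_below x)) (vvec x) = Vcone ` cst F x"
    by (rule geo_step[OF at Cons.prems(1) bG xG])
  have iv: "invF (cst F x) \<G>" by (rule inv_step[OF at Cons.prems(1) xG])
  have "set xs \<subseteq> \<G>" using Cons.prems(2) by simp
  then show ?case using Cons.IH[OF iv] st by simp
qed

lemma comb_fold:
  fixes gs :: "'a::{finite,complete_lattice} list"
  assumes at: "atomic_lattice TYPE('a)" and bs: "building_set \<G>"
    and dist: "distinct gs" and sg: "set gs = \<G>"
    and ord: "\<forall>i<length gs. \<forall>j<length gs. gs ! i \<le> gs ! j \<longrightarrow> j \<le> i"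
  shows "k \<le> length gs \<Longrightarrow> nested ({a. is_atom a} \<union> set (take k gs)) S \<Longrightarrow> S \<in> Fam (take k gs)"
proof (induction k arbitrary: S)
  case 0
  then have "S \<subseteq> {a. is_atom a}" using nestedD2 by fastforce
  then show ?case unfolding Fam_def by simp
next
  case (Suc k)
  have kl: "k < length gs" using Suc.prems(1) by simp
  define P where "P = set (take k gs)"
  define G where "G = gs ! k"
  have tk: "take (Suc k) gs = take k gs @ [G]" unfolding G_def using kl by (rule take_Suc_conv_app_nth)
  have FamS: "Fam (take (Suc k) gs) = cst (Fam (take k gs)) G" unfolding tk Fam_def by simp
  have setS: "set (take (Suc k) gs) = insert G P" unfolding tk P_def by simp
  have GG: "G \<in> \<G>" unfolding G_def using nth_mem[OF kl] sg by simp
  have PG: "P \<subseteq> \<G>" unfolding P_def sg[symmetric] by (rule set_take_subset)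
  have above: "\<forall>H\<in>\<G>. G < H \<longrightarrow> H \<in> P"
  proof (intro ballI impI)
    fix H assume H: "H \<in> \<G>" "G < H"
    then obtain j where j: "j < length gs" "gs ! j = H" using sg by (metis in_set_conv_nth)
    have "j \<le> k" using ord kl j H(2) unfolding G_def by (metis less_imp_le)
    moreover have "j \<noteq> k" using H(2) j(2) unfolding G_def by blast
    ultimately have "j < k" by simp
    then have "take k gs ! j = H" using j by simp
    moreover have "j < length (take k gs)" using \<open>j < k\<close> j(1) by simp
    ultimately show "H \<in> P" unfolding P_def by (metis nth_mem)
  qed
  have notbelow: "\<forall>J\<in>P. \<not> J \<le> G"
  proof (intro ballI notI)
    fix J assume J: "J \<in> P" "J \<le> G"
    then obtain j where j: "j < length (take k gs)" "take k gs ! j = J" unfolding P_def by (metis in_set_conv_nth)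
    then have jk: "j < k" "gs ! j = J" by auto
    then have "k \<le> j" using ord kl J(2) unfolding G_def by (metis less_trans)
    then show False using jk by simp
  qed
  have IH: "\<And>S. nested ({a. is_atom a} \<union> P) S \<Longrightarrow> S \<in> Fam (take k gs)"
    using Suc.IH kl unfolding P_def by simp
  have NC: "nested ({a. is_atom a} \<union> insert G P) S" using Suc.prems(2) unfolding setS .
  show ?case unfolding FamS by (rule comb_step[OF at bs GG PG above notbelow IH NC])
qed



theorem theorem6p1:
  fixes \<G> :: "'a::{finite,complete_lattice} set" and gs :: "'a list"
  assumes "atomic_lattice TYPE('a)"
    and "building_set \<G>"
    and "distinct gs" and "set gs = \<G>"
    and "\<forall>i<length gs. \<forall>j<length gs. gs ! i \<le> gs ! j \<longrightarrow> j \<le> i"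
  shows "Theta \<G> gs = Sigma_fan \<G>"
proof -
  note at = assms(1) and bs = assms(2)
  have bG: "bot \<notin> \<G>" by (rule bs_bot[OF bs])
  have AG: "{a::'a. is_atom a} \<subseteq> \<G>" using bs_atom[OF bs] by blast
  have inv0: "invF (Pow {a::'a. is_atom a}) \<G>"
    unfolding invF_def
  proof (intro ballI conjI)
    fix C assume "C \<in> Pow {a::'a. is_atom a}"
    then have C: "C \<subseteq> {a::'a. is_atom a}" by simp
    then show "C \<subseteq> \<G>" using AG by (rule order_trans)
    have "vvec ` C \<subseteq> vvec ` {a::'a. is_atom a}" using C by (rule image_mono)
    then show "independent (vvec ` C)" using Theta0_eq(2)[OF at] independent_mono by blast
  qed
  have sG: "set gs \<subseteq> \<G>" using assms(4) by simp
  have gf: "fold (\<lambda>G \<Theta>. stellar \<Theta> (Vcone (atoms_below G)) (vvec G)) gs (Vcone ` Pow {a::'a. is_atom a})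
      = Vcone ` Fam gs \<and> invF (Fam gs) \<G>"
    unfolding Fam_def by (rule geo_fold[OF at bG inv0 sG])
  have TT: "Theta_tilde gs = Vcone ` Fam gs"
    unfolding Theta_tilde_def Theta0_eq(1)[OF at] using gf by simp
  have invT: "invF (Fam gs) \<G>" using gf by simp
  have NL: "S \<in> Fam gs" if "nested \<G> S" for S
  proof -
    have eq: "{a::'a. is_atom a} \<union> set (take (length gs) gs) = \<G>" using AG assms(4) by (simp add: Un_absorb1)
    have "nested ({a::'a. is_atom a} \<union> set (take (length gs) gs)) S" unfolding eq by (rule that)
    then have "S \<in> Fam (take (length gs) gs)"
      using comb_fold[OF at bs assms(3,4,5), of "length gs" S] by simp
    then show ?thesis by simp
  qed
  show ?thesis
  proof
    show "Theta \<G> gs \<subseteq> Sigma_fan \<G>"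
    proof
      fix x assume x: "x \<in> Theta \<G> gs"
      then have "x \<in> Theta_tilde gs" unfolding Theta_def by blast
      then obtain C where C: "C \<in> Fam gs" "x = Vcone C" unfolding TT by blast
      have CG: "C \<subseteq> \<G>" using invT C(1) unfolding invF_def by blast
      have "nested \<G> C"
      proof (rule ccontr)
        assume "\<not> nested \<G> C"
        then have "x \<in> {Vcone T | T. T \<subseteq> \<G> \<and> \<not> nested \<G> T}" using C(2) CG by blast
        then show False using x unfolding Theta_def by blast
      qed
      then show "x \<in> Sigma_fan \<G>" unfolding Sigma_fan_def using C(2) by blast
    qed
  next
    show "Sigma_fan \<G> \<subseteq> Theta \<G> gs"
    proof
      fix x assume "x \<in> Sigma_fan \<G>"
      then obtain S where S: "nested \<G> S" "x = Vcone S" unfolding Sigma_fan_def by blast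
      have xT: "x \<in> Theta_tilde gs" unfolding TT using NL[OF S(1)] S(2) by blast
      have "x \<notin> {Vcone T | T. T \<subseteq> \<G> \<and> \<not> nested \<G> T}"
      proof
        assume "x \<in> {Vcone T | T. T \<subseteq> \<G> \<and> \<not> nested \<G> T}"
        then obtain T where T: "T \<subseteq> \<G>" "\<not> nested \<G> T" "x = Vcone T" by blast
        have "T \<subseteq> S"
        proof
          fix H assume H: "H \<in> T"
          then have "vvec H \<in> Vcone S" using vvec_in_Vcone[OF H] T(3) S(2) by simp
          then show "H \<in> S" using nested_lemma[OF at bG S(1)] H T(1) by blast
        qed
        then have "nested \<G> T" by (rule nested_subset[OF S(1)])
        then show False using T(2) by simp
      qed
      then show "x \<in> Theta \<G> gs" unfolding Theta_def using xT by blast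
    qed
  qed
qed


end
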